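(* Let $\mathcal{G}=(\mathcal{V},\mathcal{E},A)$ be a connected directed graph with diagonal matrix of out-degrees $D$, and suppose there is a permutation matrix $P$ with $D=AP$. Let $\mathcal{G}_u$ be the undirected graph on the same node set with adjacency matrix $A_u=\frac12(A+A^T)$ (so $(i,j)\in\mathcal{E}$ implies both $(i,j)$ and $(j,i)$ are edges of $\mathcal{G}_u$). Then for every pair of nodes $k,j$, the effective resistance between $k$ and $j$ in $\mathcal{G}$ equals the effective resistance between $k$ and $j$ in $\mathcal{G}_u$.
   Context: A (weighted directed) graph $\mathcal{G}=(\mathcal{V},\mathcal{E},A)$ has node set $\mathcal{V}=\{1,\dots,N\}$, edge set $\mathcal{E}\subseteq\mathcal{V}\times\mathcal{V}$, and nonnegative adjacency matrix $A=[a_{i,j}]\in\mathbb{R}^{N\times N}$ with $a_{i,j}>0$ iff $(i,j)\in\mathcal{E}$; $(i,j)$ is an edge from $i$ to $j$. The graph is undirected if $A$ is symmetric. The out-degree of node $k$ is $d_k=\sum_j a_{k,j}$, $D=\mathrm{diag}(d_1,\dots,d_N)$, and the Laplacian is $L=D-A$. Directed paths follow edges in their direction. $\mathcal{G}$ is connected if it contains a globally reachable node (a node reachable by a directed path from every node). Let $\mathbf{1}_N$ be the all-ones vector, $\Pi=I_N-\frac1N\mathbf{1}_N\mathbf{1}_N^T$, and $Q\in\mathbb{R}^{(N-1)\times N}$ any matrix with $Q\mathbf{1}_N=\mathbf{0}$, $QQ^T=I_{N-1}$, $Q^TQ=\Pi$. For connected $\mathcal{G}$, let $\overline{L}=QLQ^T$,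 let $\Sigma$ be the unique solution of $\overline{L}\Sigma+\Sigma\overline{L}^T=I_{N-1}$, and $X=[x_{i,j}]=2Q^T\Sigma Q$ ($X$ does not depend on the choice of $Q$). The effective resistance between nodes $k$ and $j$ is $r_{k,j}=x_{k,k}+x_{j,j}-2x_{k,j}$. A permutation matrix has exactly one entry $1$ in each row and column and zeros elsewhere. *)

theory Defs
  imports "Jordan_Normal_Form.Matrix"
begin

text \<open>Nodes are indexed 0,...,N-1 (instead of 1,...,N). A weighted directed graph on N nodes
  is given by its nonnegative adjacency matrix A (an N x N real matrix); (i,j) is an edge iff A(i,j) > 0.\<close>

definition adjacency_matrix :: "nat \<Rightarrow> real mat \<Rightarrow> bool" where
  "adjacency_matrix N A \<longleftrightarrow> A \<in> carrier_mat N N \<and> (\<forall>i<N. \<forall>j<N. A $$ (i,j) \<ge> 0)"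

definition edges :: "nat \<Rightarrow> real mat \<Rightarrow> (nat \<times> nat) set" where
  "edges N A = {(i,j). i < N \<and> j < N \<and> A $$ (i,j) > 0}"

definition globally_reachable :: "nat \<Rightarrow> real mat \<Rightarrow> nat \<Rightarrow> bool" where
  "globally_reachable N A k \<longleftrightarrow> k < N \<and> (\<forall>i<N. (i,k) \<in> (edges N A)\<^sup>*)"

definition connected_graph :: "nat \<Rightarrow> real mat \<Rightarrow> bool" where
  "connected_graph N A \<longleftrightarrow> (\<exists>k. globally_reachable N A k)"

definition out_degree_mat :: "nat \<Rightarrow> real mat \<Rightarrow> real mat" where
  "out_degree_mat N A = mat N N (\<lambda>(i,j). if i = j then (\<Sum>l<N. A $$ (i,l)) else 0)"

definition laplacian :: "nat \<Rightarrow> real mat \<Rightarrow> real mat" where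
  "laplacian N A = out_degree_mat N A - A"

definition ones_vec :: "nat \<Rightarrow> real vec" where
  "ones_vec N = vec N (\<lambda>_. 1)"

definition Pi_mat :: "nat \<Rightarrow> real mat" where
  "Pi_mat N = 1\<^sub>m N - (1 / real N) \<cdot>\<^sub>m mat N N (\<lambda>_. 1)"

definition valid_Q :: "nat \<Rightarrow> real mat \<Rightarrow> bool" where
  "valid_Q N Q \<longleftrightarrow> Q \<in> carrier_mat (N - 1) N \<and> Q *\<^sub>v ones_vec N = 0\<^sub>v (N - 1)
     \<and> Q * Q\<^sup>T = 1\<^sub>m (N - 1) \<and> Q\<^sup>T * Q = Pi_mat N"

definition Q_of :: "nat \<Rightarrow> real mat" where
  "Q_of N = (SOME Q. valid_Q N Q)"

definition reduced_laplacian :: "nat \<Rightarrow> real mat \<Rightarrow> real mat" where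
  "reduced_laplacian N A = Q_of N * laplacian N A * (Q_of N)\<^sup>T"

definition Sigma_of :: "nat \<Rightarrow> real mat \<Rightarrow> real mat" where
  "Sigma_of N A = (THE S. S \<in> carrier_mat (N - 1) (N - 1) \<and>
      reduced_laplacian N A * S + S * (reduced_laplacian N A)\<^sup>T = 1\<^sub>m (N - 1))"

definition X_of :: "nat \<Rightarrow> real mat \<Rightarrow> real mat" where
  "X_of N A = 2 \<cdot>\<^sub>m ((Q_of N)\<^sup>T * Sigma_of N A * Q_of N)"

definition effective_resistance :: "nat \<Rightarrow> real mat \<Rightarrow> nat \<Rightarrow> nat \<Rightarrow> real" where
  "effective_resistance N A k j =
     X_of N A $$ (k,k) + X_of N A $$ (j,j) - 2 * X_of N A $$ (k,j)"

definition permutation_mat :: "nat \<Rightarrow> real mat \<Rightarrow> bool" where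
  "permutation_mat N P \<longleftrightarrow> P \<in> carrier_mat N N \<and>
     (\<forall>i<N. \<forall>j<N. P $$ (i,j) = 0 \<or> P $$ (i,j) = 1) \<and>
     (\<forall>i<N. \<exists>!j. j < N \<and> P $$ (i,j) = 1) \<and>
     (\<forall>j<N. \<exists>!i. i < N \<and> P $$ (i,j) = 1)"

definition undirected_version :: "real mat \<Rightarrow> real mat" where
  "undirected_version A = (1/2) \<cdot>\<^sub>m (A + A\<^sup>T)"

end

theory Submission
  imports Defs "Jordan_Normal_Form.Determinant"
begin

definition mtr :: "real mat \<Rightarrow> real" where "mtr X = (\<Sum>i<dim_row X. X $$ (i,i))"

lemma mtr_comm: assumes "X \<in> carrier_mat n m" "Y \<in> carrier_mat m n"
  shows "mtr (X * Y) = mtr (Y * X)"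
proof -
  have "mtr (X*Y) = (\<Sum>i<n. \<Sum>k<m. X$$(i,k) * Y$$(k,i))"
    using assms by (simp add: mtr_def scalar_prod_def atLeast0LessThan)
  also have "\<dots> = (\<Sum>k<m. \<Sum>i<n. Y$$(k,i) * X$$(i,k))"
    by (subst sum.swap) (simp add: mult.commute)
  also have "\<dots> = mtr (Y*X)"
    using assms by (simp add: mtr_def scalar_prod_def atLeast0LessThan)
  finally show ?thesis .
qed

lemma mtr_transpose: "X \<in> carrier_mat n n \<Longrightarrow> mtr (X\<^sup>T) = mtr X"
  by (simp add: mtr_def)

lemma mtr_add: "X \<in> carrier_mat n n \<Longrightarrow> Y \<in> carrier_mat n n \<Longrightarrow> mtr (X + Y) = mtr X + mtr Y"
  by (simp add: mtr_def sum.distrib)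

lemma mtr_smult: "X \<in> carrier_mat n n \<Longrightarrow> mtr (c \<cdot>\<^sub>m X) = c * mtr X"
  by (simp add: mtr_def sum_distrib_left)

lemma mtr_sym: assumes C: "C \<in> carrier_mat n n" and G: "G \<in> carrier_mat n n" and "G\<^sup>T = G"
  shows "mtr (C * G) = mtr (C\<^sup>T * G)"
proof -
  have "mtr (C * G) = mtr ((C * G)\<^sup>T)" using C G by (simp add: mtr_transpose[of "C*G" n])
  also have "\<dots> = mtr (G * C\<^sup>T)" using C G assms(3) by (simp add: transpose_mult)
  also have "\<dots> = mtr (C\<^sup>T * G)" using C G by (intro mtr_comm) auto
  finally show ?thesis .
qed

definition pd :: "nat \<Rightarrow> real mat \<Rightarrow> bool" where
  "pd n P \<longleftrightarrow> (\<forall>v \<in> carrier_vec n. v \<noteq> 0\<^sub>v n \<longrightarrow> v \<bullet> (P *\<^sub>v v) > 0)"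

lemma pd_ge: "pd n P \<Longrightarrow> v \<in> carrier_vec n \<Longrightarrow> P \<in> carrier_mat n n \<Longrightarrow> v \<bullet> (P *\<^sub>v v) \<ge> 0"
  unfolding pd_def by (cases "v = 0\<^sub>v n") (auto intro: less_imp_le)

lemma mtr_psd: assumes P: "P \<in> carrier_mat n n" and pd: "pd n P" and W: "W \<in> carrier_mat m n"
  shows "mtr (W * P * W\<^sup>T) \<ge> 0" and "mtr (W * P * W\<^sup>T) = 0 \<Longrightarrow> W = 0\<^sub>m m n"
proof -
  have e: "mtr (W * P * W\<^sup>T) = (\<Sum>i<m. row W i \<bullet> (P *\<^sub>v row W i))"
  proof -
    have "mtr (W * P * W\<^sup>T) = mtr (W * (P * W\<^sup>T))" using P W by simp
    also have "\<dots> = (\<Sum>i<m. row W i \<bullet> (P *\<^sub>v row W i))"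
      unfolding mtr_def using P W by (intro sum.cong) (auto simp: mult_mat_vec_def)
    finally show ?thesis .
  qed
  have nn: "\<And>i. i < m \<Longrightarrow> row W i \<bullet> (P *\<^sub>v row W i) \<ge> 0"
    using pd_ge[OF pd _ P] W by auto
  show "mtr (W * P * W\<^sup>T) \<ge> 0" unfolding e using nn by (intro sum_nonneg) auto
  assume "mtr (W * P * W\<^sup>T) = 0"
  hence "\<forall>i\<in>{..<m}. row W i \<bullet> (P *\<^sub>v row W i) = 0"
    unfolding e using nn by (subst sum_nonneg_eq_0_iff[symmetric]) auto
  hence z: "\<And>i. i < m \<Longrightarrow> row W i = 0\<^sub>v n" using pd W unfolding pd_def
    by (metis lessThan_iff less_irrefl row_carrier_vec)
  show "W = 0\<^sub>m m n"
  proof (rule eq_matI)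
    fix i j assume "i < dim_row (0\<^sub>m m n)" "j < dim_col (0\<^sub>m m n)"
    hence ij: "i < m" "j < n" by auto
    have "W $$ (i,j) = row W i $ j" using W ij by simp
    thus "W $$ (i,j) = 0\<^sub>m m n $$ (i,j)" using z[OF ij(1)] ij by simp
  qed (use W in auto)
qed

lemma lyap_unique:
  assumes P: "P \<in> carrier_mat n n" and L: "L \<in> carrier_mat n n" and S: "S \<in> carrier_mat n n"
    and Ps: "P\<^sup>T = P" and pd: "pd n P"
    and PL: "P * L + L\<^sup>T * P = 2 \<cdot>\<^sub>m (P * P)"
    and LS: "L * S + S * L\<^sup>T = 0\<^sub>m n n"
  shows "S = 0\<^sub>m n n"
proof -
  note c = P L S
  have cm[simp]: "\<And>A B :: real mat. A \<in> carrier_mat n n \<Longrightarrow> B \<in> carrier_mat n n \<Longrightarrow> A * B \<in> carrier_mat n n" by simp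
  have ca[simp]: "\<And>A B C :: real mat. A \<in> carrier_mat n n \<Longrightarrow> B \<in> carrier_mat n n \<Longrightarrow> C \<in> carrier_mat n n \<Longrightarrow> A * B * C = A * (B * C)" by simp
  have ctm[simp]: "(A * B)\<^sup>T = B\<^sup>T * A\<^sup>T" if "A \<in> carrier_mat n n" "B \<in> carrier_mat n n" for A B :: "real mat"
    using that transpose_mult[of A n n B] by simp
  have ct[simp]: "\<And>A :: real mat. A \<in> carrier_mat n n \<Longrightarrow> A\<^sup>T \<in> carrier_mat n n" by simp
  have sym: "mtr (P * L * G) = mtr (P * P * G)" if G: "G \<in> carrier_mat n n" "G\<^sup>T = G" for G
  proof -
    have "mtr (P * L * G) = mtr ((P * L)\<^sup>T * G)" using c G by (intro mtr_sym) auto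
    also have "(P * L)\<^sup>T = L\<^sup>T * P" using c Ps by (simp add: transpose_mult)
    finally have a: "mtr (P * L * G) = mtr (L\<^sup>T * P * G)" .
    have "2 * mtr (P * L * G) = mtr (P * L * G) + mtr (L\<^sup>T * P * G)" using a by simp
    also have "\<dots> = mtr ((P * L + L\<^sup>T * P) * G)" using c G
      by (simp add: mtr_add[of _ n] add_mult_distrib_mat[of _ n n])
    also have "\<dots> = 2 * mtr (P * P * G)" unfolding PL using c G
      by (simp add: mtr_smult[of _ n] mult_smult_assoc_mat[of _ n n])
    finally show ?thesis by simp
  qed
  define T1 where "T1 = mtr (P * S\<^sup>T * P * L * S)"
  define T2 where "T2 = mtr (P * S\<^sup>T * P * S * L\<^sup>T)"
  have "0 = mtr (P * S\<^sup>T * P * (L * S + S * L\<^sup>T))" unfolding LS using c by (simp add: mtr_def)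
  also have "\<dots> = T1 + T2"
  proof -
    define K where "K = P * S\<^sup>T * P"
    have K: "K \<in> carrier_mat n n" unfolding K_def using c by simp
    have "K * (L * S + S * L\<^sup>T) = K * (L * S) + K * (S * L\<^sup>T)"
      using K c by (intro mult_add_distrib_mat) auto
    also have "K * (L * S) = K * L * S" using K c by simp
    also have "K * (S * L\<^sup>T) = K * S * L\<^sup>T" using K c by simp
    finally have "mtr (K * (L * S + S * L\<^sup>T)) = mtr (K * L * S) + mtr (K * S * L\<^sup>T)"
      using K c by (simp add: mtr_add[of _ n])
    thus ?thesis unfolding T1_def T2_def K_def by simp
  qed
  finally have sum0: "T1 + T2 = 0" by simp
  have "T1 = mtr ((P * L * S) * (P * S\<^sup>T))" unfolding T1_def
    using c mtr_comm[of "P * S\<^sup>T" n n "P * L * S"] by simp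
  also have "\<dots> = mtr (P * L * (S * P * S\<^sup>T))" using c by simp
  also have "\<dots> = mtr (P * P * (S * P * S\<^sup>T))" using c Ps
    by (intro sym) (auto simp: transpose_mult)
  also have "\<dots> = mtr ((P * S * P * S\<^sup>T) * P)" 
    using c mtr_comm[of P n n "P * S * P * S\<^sup>T"] by simp
  also have "\<dots> = mtr ((P * S) * P * (P * S)\<^sup>T)" using c Ps by (simp add: transpose_mult)
  finally have T1e: "T1 = mtr ((P * S) * P * (P * S)\<^sup>T)" .
  have "T2 = mtr ((L\<^sup>T) * (P * S\<^sup>T * P * S))" unfolding T2_def
    using c mtr_comm[of "P * S\<^sup>T * P * S" n n "L\<^sup>T"] by simp
  also have "\<dots> = mtr ((L\<^sup>T * P) * (S\<^sup>T * P * S))" using c by simp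
  also have "\<dots> = mtr ((L\<^sup>T * P)\<^sup>T * (S\<^sup>T * P * S))" using c Ps
    by (intro mtr_sym) auto
  also have "\<dots> = mtr (P * L * (S\<^sup>T * P * S))" using c Ps by simp
  also have "\<dots> = mtr (P * P * (S\<^sup>T * P * S))" using c Ps
    by (intro sym) (auto simp: transpose_mult)
  also have "\<dots> = mtr ((P * S\<^sup>T * P * S) * P)" 
    using c mtr_comm[of P n n "P * S\<^sup>T * P * S"] by simp
  also have "\<dots> = mtr ((P * S\<^sup>T) * P * (P * S\<^sup>T)\<^sup>T)" using c Ps by (simp add: transpose_mult)
  finally have T2e: "T2 = mtr ((P * S\<^sup>T) * P * (P * S\<^sup>T)\<^sup>T)" .
  have g1: "T1 \<ge> 0" unfolding T1e using c pd by (intro mtr_psd(1)) auto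
  have g2: "T2 \<ge> 0" unfolding T2e using c pd by (intro mtr_psd(1)) auto
  have "T1 = 0" using g1 g2 sum0 by simp
  hence PS: "P * S = 0\<^sub>m n n" unfolding T1e using c pd by (intro mtr_psd(2)) auto
  show ?thesis
  proof (rule eq_matI)
    fix i j assume "i < dim_row (0\<^sub>m n n)" "j < dim_col (0\<^sub>m n n)"
    hence ij: "i < n" "j < n" by auto
    have "P *\<^sub>v col S j = col (P * S) j" by (rule col_mult2[symmetric, OF P S ij(2)])
    also have "\<dots> = 0\<^sub>v n" unfolding PS using ij by simp
    finally have "col S j \<bullet> (P *\<^sub>v col S j) = 0" using c ij by simp
    hence "col S j = 0\<^sub>v n" using pd c ij unfolding pd_def by (metis col_carrier_vec less_irrefl)
    hence "col S j $ i = 0" using ij by simp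
    thus "S $$ (i,j) = 0\<^sub>m n n $$ (i,j)" using c ij by simp
  qed (use c in auto)
qed


definition hc :: "nat \<Rightarrow> nat \<Rightarrow> real" where
  "hc m i = (if i < m then 1 / sqrt (real m * (real m + 1))
             else if i = m then - real m / sqrt (real m * (real m + 1)) else 0)"

lemma sum_step: "m < N \<Longrightarrow> (\<Sum>i<N. if i < m then a else if i = m then b else 0) = real m * a + (b::real)"
proof (induction N)
  case 0 then show ?case by simp
next
  case (Suc N)
  show ?case
  proof (cases "m < N")
    case True
    then show ?thesis using Suc by simp
  next
    case False
    hence "m = N" using Suc by simp
    thus ?thesis by simp
  qed
qed

lemma hc_rowsum: "m < N \<Longrightarrow> (\<Sum>i<N. hc m i) = 0"
  unfolding hc_def by (subst sum_step) (auto simp: field_simps)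

lemma hc_zero: "m < i \<Longrightarrow> hc m i = 0" unfolding hc_def by auto

lemma hc_prod: assumes "1 \<le> m" "m < N" "1 \<le> m'" "m' < N"
  shows "(\<Sum>i<N. hc m i * hc m' i) = (if m = m' then 1 else 0)"
proof -
  have gen: "(\<Sum>i<N. hc a i * hc b i) = 0" if ab: "a < b" "b < N" for a b
  proof -
    have "(\<Sum>i<N. hc a i * hc b i) = (\<Sum>i<N. hc a i * (1 / sqrt (real b * (real b + 1))))"
    proof (intro sum.cong refl)
      fix i assume "i \<in> {..<N}"
      show "hc a i * hc b i = hc a i * (1 / sqrt (real b * (real b + 1)))"
      proof (cases "i \<le> a")
        case True thus ?thesis using ab by (simp add: hc_def)
      next
        case False thus ?thesis by (simp add: hc_zero)
      qed
    qed
    also have "\<dots> = 0" using hc_rowsum[of a N] ab by (simp add: sum_divide_distrib[symmetric])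
    finally show ?thesis .
  qed
  show ?thesis
  proof (cases "m = m'")
    case True
    have pos: "real m * (real m + 1) > 0" using assms by simp
    have "(\<Sum>i<N. hc m i * hc m i) = (\<Sum>i<N. if i < m then 1 / (real m * (real m + 1))
         else if i = m then real m ^ 2 / (real m * (real m + 1)) else 0)"
      using pos by (intro sum.cong refl) (auto simp: hc_def power2_eq_square)
    also have "\<dots> = real m * (1 / (real m * (real m + 1))) + real m ^ 2 / (real m * (real m + 1))"
      using assms by (intro sum_step) auto
    also have "\<dots> = (real m + real m ^ 2) / (real m * (real m + 1))"
      by (simp add: add_divide_distrib)
    also have "\<dots> = (real m * (real m + 1)) / (real m * (real m + 1))"
      by (simp add: power2_eq_square algebra_simps)
    also have "\<dots> = 1" using pos assms by simp
    finally show ?thesis using True by simp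
  next
    case False
    show ?thesis
    proof (cases "m < m'")
      case True thus ?thesis using gen[of m m'] assms by simp
    next
      case False': False
      hence "m' < m" using False by simp
      thus ?thesis using gen[of m' m] assms False by (simp add: mult.commute)
    qed
  qed
qed

definition helmert :: "nat \<Rightarrow> real mat" where
  "helmert N = mat (N - 1) N (\<lambda>(k,i). hc (k+1) i)"

lemma helmert_carrier: "helmert N \<in> carrier_mat (N-1) N" by (simp add: helmert_def)

lemma helmert_ones: "helmert N *\<^sub>v ones_vec N = 0\<^sub>v (N - 1)"
proof (rule eq_vecI)
  fix k assume "k < dim_vec (0\<^sub>v (N - 1))"
  hence k: "k < N - 1" by simp
  have "(helmert N *\<^sub>v ones_vec N) $ k = (\<Sum>i<N. hc (k+1) i)"
    using k by (simp add: helmert_def ones_vec_def scalar_prod_def atLeast0LessThan)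
  also have "\<dots> = 0" using k by (intro hc_rowsum) simp
  finally show "(helmert N *\<^sub>v ones_vec N) $ k = 0\<^sub>v (N - 1) $ k" using k by simp
qed (simp add: helmert_def)

lemma helmert_orth: "helmert N * (helmert N)\<^sup>T = 1\<^sub>m (N - 1)"
proof (rule eq_matI)
  fix k l assume "k < dim_row (1\<^sub>m (N - 1))" "l < dim_col (1\<^sub>m (N - 1))"
  hence kl: "k < N - 1" "l < N - 1" by auto
  have "(helmert N * (helmert N)\<^sup>T) $$ (k,l) = (\<Sum>i<N. hc (k+1) i * hc (l+1) i)"
    using kl by (simp add: helmert_def scalar_prod_def atLeast0LessThan)
  also have "\<dots> = (if k + 1 = l + 1 then 1 else 0)" using kl by (intro hc_prod) auto
  finally show "(helmert N * (helmert N)\<^sup>T) $$ (k,l) = 1\<^sub>m (N - 1) $$ (k,l)" using kl by simp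
qed (auto simp: helmert_def)

lemma valid_Q_from_orth:
  assumes N: "N \<ge> 1" and Q: "Q \<in> carrier_mat (N-1) N" and Q1: "Q *\<^sub>v ones_vec N = 0\<^sub>v (N - 1)"
    and QQ: "Q * Q\<^sup>T = 1\<^sub>m (N - 1)"
  shows "valid_Q N Q"
proof -
  define R where "R = mat N N (\<lambda>(i,j). if i < N - 1 then Q $$ (i,j) else 1 / sqrt (real N))"
  have R: "R \<in> carrier_mat N N" by (simp add: R_def)
  have rs: "(\<Sum>l<N. Q $$ (i,l)) = 0" if "i < N - 1" for i
  proof -
    have "(Q *\<^sub>v ones_vec N) $ i = (\<Sum>l<N. Q $$ (i,l))"
      using that Q by (simp add: ones_vec_def scalar_prod_def atLeast0LessThan)
    thus ?thesis using Q1 that by simp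
  qed
  have qq: "(\<Sum>l<N. Q $$ (i,l) * Q $$ (j,l)) = (if i = j then 1 else 0)" if "i < N - 1" "j < N - 1" for i j
  proof -
    have "(Q * Q\<^sup>T) $$ (i,j) = (\<Sum>l<N. Q $$ (i,l) * Q $$ (j,l))"
      using that Q by (simp add: scalar_prod_def atLeast0LessThan)
    thus ?thesis using QQ that by simp
  qed
  have sN: "sqrt (real N) * sqrt (real N) = real N" by simp
  have RR: "R * R\<^sup>T = 1\<^sub>m N"
  proof (rule eq_matI)
    fix i j assume "i < dim_row (1\<^sub>m N)" "j < dim_col (1\<^sub>m N)"
    hence ij: "i < N" "j < N" by auto
    have e: "(R * R\<^sup>T) $$ (i,j) = (\<Sum>l<N. R $$ (i,l) * R $$ (j,l))"
      using ij R by (simp add: scalar_prod_def atLeast0LessThan)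
    show "(R * R\<^sup>T) $$ (i,j) = 1\<^sub>m N $$ (i,j)"
    proof (cases "i < N - 1")
      case i: True
      show ?thesis
      proof (cases "j < N - 1")
        case True thus ?thesis using e i ij qq[of i j] by (simp add: R_def)
      next
        case False
        have "(\<Sum>l<N. R $$ (i,l) * R $$ (j,l)) = (\<Sum>l<N. Q $$ (i,l)) / sqrt (real N)"
          using i False ij by (simp add: R_def sum_divide_distrib)
        thus ?thesis using e rs[OF i] i False ij by simp
      qed
    next
      case i: False
      show ?thesis
      proof (cases "j < N - 1")
        case True 
        have "(\<Sum>l<N. R $$ (i,l) * R $$ (j,l)) = (\<Sum>l<N. Q $$ (j,l)) / sqrt (real N)"
          using i True ij by (simp add: R_def sum_divide_distrib mult.commute)
        thus ?thesis using e rs[OF True] i True ij by simp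
      next
        case False
        have "i = j" using i False ij by simp
        have "(\<Sum>l<N. R $$ (i,l) * R $$ (j,l)) = (\<Sum>l<N. 1 / real N)"
          using i False ij N by (intro sum.cong refl) (simp add: R_def real_sqrt_mult[symmetric])
        also have "\<dots> = 1" using N by simp
        finally show ?thesis using e \<open>i = j\<close> ij by simp
      qed
    qed
  qed (auto simp: R_def)
  have RR': "R\<^sup>T * R = 1\<^sub>m N" using mat_mult_left_right_inverse[OF R _ RR] R by simp
  have QtQ: "Q\<^sup>T * Q = Pi_mat N"
  proof (rule eq_matI)
    fix i j assume "i < dim_row (Pi_mat N)" "j < dim_col (Pi_mat N)"
    hence ij: "i < N" "j < N" by (auto simp: Pi_mat_def)
    have "(R\<^sup>T * R) $$ (i,j) = (\<Sum>l<N. R $$ (l,i) * R $$ (l,j))"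
      using ij R by (simp add: scalar_prod_def atLeast0LessThan)
    also have "\<dots> = (\<Sum>l<N-1. Q $$ (l,i) * Q $$ (l,j)) + 1 / real N"
    proof -
      obtain N' where NN: "N = Suc N'" using N by (cases N) auto
      have "(\<Sum>l<N. R $$ (l,i) * R $$ (l,j)) = (\<Sum>l<N'. R $$ (l,i) * R $$ (l,j)) + R $$ (N',i) * R $$ (N',j)"
        unfolding NN by simp
      also have "(\<Sum>l<N'. R $$ (l,i) * R $$ (l,j)) = (\<Sum>l<N'. Q $$ (l,i) * Q $$ (l,j))"
        using ij NN by (intro sum.cong refl) (auto simp: R_def)
      also have "R $$ (N',i) * R $$ (N',j) = 1 / real N"
        using ij NN by (simp add: R_def real_sqrt_mult[symmetric])
      finally show ?thesis using NN by simp
    qed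
    also have "(\<Sum>l<N-1. Q $$ (l,i) * Q $$ (l,j)) = (Q\<^sup>T * Q) $$ (i,j)"
      using ij Q by (simp add: scalar_prod_def atLeast0LessThan)
    finally have "(Q\<^sup>T * Q) $$ (i,j) = (if i = j then 1 else 0) - 1 / real N"
      using RR' ij by simp
    thus "(Q\<^sup>T * Q) $$ (i,j) = Pi_mat N $$ (i,j)" using ij by (simp add: Pi_mat_def)
  qed (use Q in \<open>auto simp: Pi_mat_def\<close>)
  show ?thesis unfolding valid_Q_def using Q Q1 QQ QtQ by simp
qed

lemma Q_of_valid: "N \<ge> 1 \<Longrightarrow> valid_Q N (Q_of N)"
  unfolding Q_of_def
  by (rule someI[of _ "helmert N"], rule valid_Q_from_orth[OF _ helmert_carrier helmert_ones helmert_orth])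


declare minus_carrier_mat[simp]

lemma mult_entry: "X \<in> carrier_mat m n \<Longrightarrow> Y \<in> carrier_mat n p \<Longrightarrow> i < m \<Longrightarrow> j < p \<Longrightarrow>
  (X * Y) $$ (i,j) = (\<Sum>l<n. X $$ (i,l) * Y $$ (l,j))"
  by (simp add: scalar_prod_def atLeast0LessThan)

lemma smult_mat_vec: "A \<in> carrier_mat n m \<Longrightarrow> v \<in> carrier_vec m \<Longrightarrow> (k \<cdot>\<^sub>m A) *\<^sub>v v = k \<cdot>\<^sub>v (A *\<^sub>v v)"
  by (rule eq_vecI) (auto simp: scalar_prod_def sum_distrib_left ac_simps)

lemma laplacian_Pi: assumes B: "B \<in> carrier_mat N N"
  shows "laplacian N B * Pi_mat N = laplacian N B"
proof (rule eq_matI)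
  fix i j assume "i < dim_row (laplacian N B)" "j < dim_col (laplacian N B)"
  hence ij: "i < N" "j < N" using B by (auto simp: laplacian_def out_degree_mat_def)
  have Lc: "laplacian N B \<in> carrier_mat N N" using B by (auto simp: laplacian_def out_degree_mat_def)
  have Le: "\<And>l. l < N \<Longrightarrow> laplacian N B $$ (i,l) = (if i = l then (\<Sum>k<N. B $$ (i,k)) else 0) - B $$ (i,l)"
    using B ij by (simp add: laplacian_def out_degree_mat_def)
  have rs: "(\<Sum>l<N. laplacian N B $$ (i,l)) = 0"
    using ij by (simp add: Le sum_subtractf)
  have "(laplacian N B * Pi_mat N) $$ (i,j) = (\<Sum>l<N. laplacian N B $$ (i,l) * ((if l = j then 1 else 0) - 1 / real N))"
    using Lc ij by (subst mult_entry[of _ N N _ N]) (auto simp: Pi_mat_def intro!: sum.cong)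
  also have "\<dots> = (\<Sum>l<N. (if l = j then laplacian N B $$ (i,l) else 0) - laplacian N B $$ (i,l) / real N)"
    by (intro sum.cong refl) (auto simp: algebra_simps)
  also have "\<dots> = (\<Sum>l<N. (if l = j then laplacian N B $$ (i,l) else 0)) - (\<Sum>l<N. laplacian N B $$ (i,l)) / real N"
    by (simp add: sum_subtractf sum_divide_distrib)
  also have "\<dots> = laplacian N B $$ (i,j)" using rs ij by simp
  finally show "(laplacian N B * Pi_mat N) $$ (i,j) = laplacian N B $$ (i,j)" .
qed (use B in \<open>auto simp: laplacian_def out_degree_mat_def Pi_mat_def\<close>)

lemma quad_diag: fixes V D :: "real mat" and y :: "real vec" assumes V: "V \<in> carrier_mat N n" and D: "D \<in> carrier_mat N N"
  and Dd: "\<And>i j. i < N \<Longrightarrow> j < N \<Longrightarrow> i \<noteq> j \<Longrightarrow> D $$ (i,j) = 0" and y: "y \<in> carrier_vec n"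
  shows "y \<bullet> ((V\<^sup>T * D * V) *\<^sub>v y) = (\<Sum>i<N. D $$ (i,i) * ((V *\<^sub>v y) $ i)^2)"
proof -
  define w where "w = V *\<^sub>v y"
  have w: "w \<in> carrier_vec N" using V y by (simp add: w_def)
  have "(V\<^sup>T * D * V) *\<^sub>v y = (V\<^sup>T * (D * V)) *\<^sub>v y" using V D by simp
  also have "\<dots> = V\<^sup>T *\<^sub>v ((D * V) *\<^sub>v y)" by (rule assoc_mult_mat_vec) (use V D y in auto)
  also have "(D * V) *\<^sub>v y = D *\<^sub>v w" unfolding w_def by (rule assoc_mult_mat_vec) (use V D y in auto)
  finally have "(V\<^sup>T * D * V) *\<^sub>v y = V\<^sup>T *\<^sub>v (D *\<^sub>v w)" .
  hence "y \<bullet> ((V\<^sup>T * D * V) *\<^sub>v y) = y \<bullet> (V\<^sup>T *\<^sub>v (D *\<^sub>v w))" by simp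
  also have "\<dots> = (V\<^sup>T *\<^sub>v (D *\<^sub>v w)) \<bullet> y" by (rule comm_scalar_prod[OF y]) (use V D w in auto)
  also have "\<dots> = (D *\<^sub>v w) \<bullet> w" unfolding w_def using V D y
    by (intro transpose_vec_mult_scalar) auto
  also have "\<dots> = (\<Sum>i<N. D $$ (i,i) * (w $ i)^2)"
  proof -
    have "(D *\<^sub>v w) \<bullet> w = (\<Sum>i<N. (\<Sum>l<N. D $$ (i,l) * w $ l) * w $ i)"
      using D w by (simp add: scalar_prod_def atLeast0LessThan)
    also have "\<dots> = (\<Sum>i<N. D $$ (i,i) * (w $ i)^2)"
    proof (intro sum.cong refl)
      fix i assume i: "i \<in> {..<N}"
      have "(\<Sum>l<N. D $$ (i,l) * w $ l) = (\<Sum>l<N. if l = i then D $$ (i,i) * w $ i else 0)"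
        using Dd i by (intro sum.cong refl) auto
      also have "\<dots> = D $$ (i,i) * w $ i" using i by simp
      finally show "(\<Sum>l<N. D $$ (i,l) * w $ l) * w $ i = D $$ (i,i) * (w $ i)^2"
        by (simp add: power2_eq_square)
    qed
    finally show ?thesis .
  qed
  finally show ?thesis unfolding w_def .
qed

lemma Mlap_identity:
  fixes D T :: "real mat"
  assumes D: "D \<in> carrier_mat N N" and T: "T \<in> carrier_mat N N" and Ds: "D\<^sup>T = D"
    and TT: "T * T\<^sup>T = 1\<^sub>m N"
  shows "((1/2) \<cdot>\<^sub>m ((1\<^sub>m N - T)\<^sup>T * D * (1\<^sub>m N - T))) * (D * (1\<^sub>m N - T))
       + (D * (1\<^sub>m N - T))\<^sup>T * ((1/2) \<cdot>\<^sub>m ((1\<^sub>m N - T)\<^sup>T * D * (1\<^sub>m N - T)))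
       = 2 \<cdot>\<^sub>m (((1/2) \<cdot>\<^sub>m ((1\<^sub>m N - T)\<^sup>T * D * (1\<^sub>m N - T))) * ((1/2) \<cdot>\<^sub>m ((1\<^sub>m N - T)\<^sup>T * D * (1\<^sub>m N - T))))"
proof -
  have cm[simp]: "\<And>A B :: real mat. A \<in> carrier_mat N N \<Longrightarrow> B \<in> carrier_mat N N \<Longrightarrow> A * B \<in> carrier_mat N N" by simp
  have ca[simp]: "\<And>A B C :: real mat. A \<in> carrier_mat N N \<Longrightarrow> B \<in> carrier_mat N N \<Longrightarrow> C \<in> carrier_mat N N \<Longrightarrow> A * B * C = A * (B * C)" by simp
  have ctm[simp]: "(A * B)\<^sup>T = B\<^sup>T * A\<^sup>T" if "A \<in> carrier_mat N N" "B \<in> carrier_mat N N" for A B :: "real mat"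
    using that transpose_mult[of A N N B] by simp
  have ct[simp]: "\<And>A :: real mat. A \<in> carrier_mat N N \<Longrightarrow> A\<^sup>T \<in> carrier_mat N N" by simp
  have cs[simp]: "\<And>(A :: real mat) B k. A \<in> carrier_mat N N \<Longrightarrow> B \<in> carrier_mat N N \<Longrightarrow> (k \<cdot>\<^sub>m A) * B = k \<cdot>\<^sub>m (A * B)"
    by (rule mult_smult_assoc_mat) auto
  have cs2[simp]: "\<And>(A :: real mat) B k. A \<in> carrier_mat N N \<Longrightarrow> B \<in> carrier_mat N N \<Longrightarrow> A * (k \<cdot>\<^sub>m B) = k \<cdot>\<^sub>m (A * B)"
    by (rule mult_smult_distrib) auto
  define U where "U = 1\<^sub>m N - T"
  have U: "U \<in> carrier_mat N N" unfolding U_def using T by simp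
  have Ut: "U\<^sup>T = 1\<^sub>m N - T\<^sup>T" unfolding U_def using T by (simp add: transpose_minus[of _ N N])
  have UU: "U * U\<^sup>T = U + U\<^sup>T"
  proof -
    have "U * U\<^sup>T = U * (1\<^sub>m N - T\<^sup>T)" by (simp only: Ut)
    also have "\<dots> = (1\<^sub>m N - T) * (1\<^sub>m N - T\<^sup>T)" by (simp only: U_def)
    also have "\<dots> = (1\<^sub>m N - T\<^sup>T) - T * (1\<^sub>m N - T\<^sup>T)"
      using T by (subst minus_mult_distrib_mat[of _ N N]) auto
    also have "T * (1\<^sub>m N - T\<^sup>T) = T - T * T\<^sup>T"
      using T by (subst mult_minus_distrib_mat[of _ N N]) auto
    also have "(1\<^sub>m N - T\<^sup>T) - (T - T * T\<^sup>T) = U + U\<^sup>T" unfolding TT Ut unfolding U_def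
      using T by (intro eq_matI) auto
    finally show ?thesis .
  qed
  define X where "X = U\<^sup>T * D * U"
  have X: "X \<in> carrier_mat N N" unfolding X_def using U D by simp
  have XX: "X * X = U\<^sup>T * D * U * D * U + U\<^sup>T * D * U\<^sup>T * D * U"
  proof -
    have "X * X = (U\<^sup>T * D) * (U * U\<^sup>T) * (D * U)" unfolding X_def using U D by simp
    also have "\<dots> = (U\<^sup>T * D) * (U + U\<^sup>T) * (D * U)" unfolding UU ..
    also have "(U\<^sup>T * D) * (U + U\<^sup>T) = (U\<^sup>T * D) * U + (U\<^sup>T * D) * U\<^sup>T"
      using U D by (intro mult_add_distrib_mat) auto
    also have "(U\<^sup>T * D * U + U\<^sup>T * D * U\<^sup>T) * (D * U) = U\<^sup>T * D * U * (D * U) + U\<^sup>T * D * U\<^sup>T * (D * U)"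
      using U D by (intro add_mult_distrib_mat) auto
    finally show ?thesis using U D by simp
  qed
  have e1: "((1/2) \<cdot>\<^sub>m X) * (D * U) = (1/2) \<cdot>\<^sub>m (U\<^sup>T * D * U * D * U)"
    unfolding X_def using U D by simp
  have e2: "(D * U)\<^sup>T * ((1/2) \<cdot>\<^sub>m X) = (1/2) \<cdot>\<^sub>m (U\<^sup>T * D * U\<^sup>T * D * U)"
    unfolding X_def using U D Ds by simp
  have e3: "((1/2) \<cdot>\<^sub>m X) * ((1/2) \<cdot>\<^sub>m X) = (1/4) \<cdot>\<^sub>m (X * X)"
    using X by simp (intro eq_matI, auto)
  have fin: "(1/2) \<cdot>\<^sub>m Y1 + (1/2) \<cdot>\<^sub>m Y2 = 2 \<cdot>\<^sub>m ((1/4) \<cdot>\<^sub>m (Y1 + Y2))"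
    if "Y1 \<in> carrier_mat N N" "Y2 \<in> carrier_mat N N" for Y1 Y2 :: "real mat"
    using that by (intro eq_matI) auto
  show ?thesis unfolding U_def[symmetric] X_def[symmetric] e1 e2 e3 XX
    using U D X by (intro fin) auto
qed

context
  fixes N :: nat and A P :: "real mat"
  assumes adj: "adjacency_matrix N A" and perm: "permutation_mat N P"
    and DAP: "out_degree_mat N A = A * P"
begin

lemma cA: "A \<in> carrier_mat N N" using adj by (simp add: adjacency_matrix_def)
lemma cP: "P \<in> carrier_mat N N" using perm by (simp add: permutation_mat_def)
lemma cD: "out_degree_mat N A \<in> carrier_mat N N" by (simp add: out_degree_mat_def)

lemma P01: "i < N \<Longrightarrow> j < N \<Longrightarrow> P $$ (i,j) = 0 \<or> P $$ (i,j) = 1"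
  using perm by (simp add: permutation_mat_def)
lemma Prow: "i < N \<Longrightarrow> \<exists>!j. j < N \<and> P $$ (i,j) = 1"
  using perm by (simp add: permutation_mat_def)
lemma Pcol: "j < N \<Longrightarrow> \<exists>!i. i < N \<and> P $$ (i,j) = 1"
  using perm by (simp add: permutation_mat_def)

lemma PPt: "P * P\<^sup>T = 1\<^sub>m N"
proof (rule eq_matI)
  fix i j assume "i < dim_row (1\<^sub>m N)" "j < dim_col (1\<^sub>m N)"
  hence ij: "i < N" "j < N" by auto
  have e: "(P * P\<^sup>T) $$ (i,j) = (\<Sum>l<N. P $$ (i,l) * P $$ (j,l))"
    using ij cP by (subst mult_entry[of _ N N _ N]) auto
  show "(P * P\<^sup>T) $$ (i,j) = 1\<^sub>m N $$ (i,j)"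
  proof (cases "i = j")
    case True
    obtain j0 where j0: "j0 < N" "P $$ (i,j0) = 1" and u: "\<And>l. l < N \<Longrightarrow> P $$ (i,l) = 1 \<Longrightarrow> l = j0"
      using Prow[OF ij(1)] by blast
    have "(\<Sum>l<N. P $$ (i,l) * P $$ (j,l)) = (\<Sum>l<N. if l = j0 then 1 else 0)"
    proof (intro sum.cong refl)
      fix l assume l: "l \<in> {..<N}"
      show "P $$ (i,l) * P $$ (j,l) = (if l = j0 then 1 else 0)"
      proof (cases "l = j0")
        case True thus ?thesis using j0 \<open>i = j\<close> by simp
      next
        case False
        have "P $$ (i,l) \<noteq> 1" using u[of l] l False by auto
        hence "P $$ (i,l) = 0" using P01[OF ij(1), of l] l by auto
        thus ?thesis using False by simp
      qed
    qed
    also have "\<dots> = 1" using j0 by simp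
    finally show ?thesis using e True ij by simp
  next
    case False
    have "(\<Sum>l<N. P $$ (i,l) * P $$ (j,l)) = 0"
    proof (intro sum.neutral ballI)
      fix l assume l: "l \<in> {..<N}"
      have lN: "l < N" using l by simp
      obtain i0 where "\<And>k. k < N \<Longrightarrow> P $$ (k,l) = 1 \<Longrightarrow> k = i0"
        using Pcol[OF lN] by blast
      hence "\<not> (P $$ (i,l) = 1 \<and> P $$ (j,l) = 1)" using ij False by metis
      thus "P $$ (i,l) * P $$ (j,l) = 0" using P01[OF ij(1) lN] P01[OF ij(2) lN] by auto
    qed
    thus ?thesis using e False ij by simp
  qed
qed (use cP in auto)

lemma PtP: "P\<^sup>T * P = 1\<^sub>m N"
  using mat_mult_left_right_inverse[OF cP _ PPt] cP by simp

lemma A_eq: "A = out_degree_mat N A * P\<^sup>T"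
proof -
  have "out_degree_mat N A * P\<^sup>T = A * P * P\<^sup>T" by (simp add: DAP)
  also have "\<dots> = A * (P * P\<^sup>T)" using cA cP by (simp)
  also have "\<dots> = A" using cA by (simp add: PPt)
  finally show ?thesis by simp
qed

definition dg :: "nat \<Rightarrow> real" where "dg i = (\<Sum>l<N. A $$ (i,l))"

lemma D_entry: "i < N \<Longrightarrow> j < N \<Longrightarrow> out_degree_mat N A $$ (i,j) = (if i = j then dg i else 0)"
  by (simp add: out_degree_mat_def dg_def)

lemma dg_nonneg: "i < N \<Longrightarrow> dg i \<ge> 0"
  using adj unfolding dg_def adjacency_matrix_def by (auto intro: sum_nonneg)

lemma A_entry: "i < N \<Longrightarrow> j < N \<Longrightarrow> A $$ (i,j) = dg i * P $$ (j,i)"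
proof -
  assume ij: "i < N" "j < N"
  have "A $$ (i,j) = (out_degree_mat N A * P\<^sup>T) $$ (i,j)" using A_eq by simp
  also have "\<dots> = (\<Sum>l<N. out_degree_mat N A $$ (i,l) * P\<^sup>T $$ (l,j))"
    using ij cP by (intro mult_entry[of _ N N]) (auto simp: cD)
  also have "\<dots> = (\<Sum>l<N. if l = i then dg i * P $$ (j,i) else 0)"
    using ij cP by (intro sum.cong refl) (auto simp: D_entry)
  also have "\<dots> = dg i * P $$ (j,i)" using ij by simp
  finally show ?thesis .
qed

lemma P_orth0: "i < N \<Longrightarrow> j < N \<Longrightarrow> l < N \<Longrightarrow> i \<noteq> j \<Longrightarrow> P $$ (i,l) * P $$ (j,l) = 0"
proof -
  assume ij: "i < N" "j < N" and lN: "l < N" and ne: "i \<noteq> j"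
  obtain i0 where "\<And>k. k < N \<Longrightarrow> P $$ (k,l) = 1 \<Longrightarrow> k = i0"
    using Pcol[OF lN] by blast
  hence "\<not> (P $$ (i,l) = 1 \<and> P $$ (j,l) = 1)" using ij ne by metis
  thus "P $$ (i,l) * P $$ (j,l) = 0" using P01[OF ij(1) lN] P01[OF ij(2) lN] by auto
qed

lemma P_sq: "i < N \<Longrightarrow> l < N \<Longrightarrow> P $$ (i,l) * P $$ (i,l) = P $$ (i,l)"
  using P01[of i l] by auto

lemma PA_entry: "i < N \<Longrightarrow> j < N \<Longrightarrow> (P * A) $$ (i,j) = (if i = j then (\<Sum>l<N. A $$ (l,i)) else 0)"
proof -
  assume ij: "i < N" "j < N"
  have "(P * A) $$ (i,j) = (\<Sum>l<N. P $$ (i,l) * A $$ (l,j))"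
    using ij cP cA by (intro mult_entry) auto
  also have "\<dots> = (\<Sum>l<N. dg l * (P $$ (i,l) * P $$ (j,l)))"
    using ij by (intro sum.cong refl) (auto simp: A_entry)
  also have "\<dots> = (if i = j then (\<Sum>l<N. A $$ (l,i)) else 0)"
  proof (cases "i = j")
    case True thus ?thesis using ij by (auto simp: P_sq A_entry intro!: sum.cong)
  next
    case False thus ?thesis using ij by (auto simp: P_orth0)
  qed
  finally show ?thesis .
qed

lemma PD_entry: "i < N \<Longrightarrow> j < N \<Longrightarrow> (P * out_degree_mat N A) $$ (i,j) = A $$ (j,i)"
proof -
  assume ij: "i < N" "j < N"
  have "(P * out_degree_mat N A) $$ (i,j) = (\<Sum>l<N. P $$ (i,l) * out_degree_mat N A $$ (l,j))"
    using ij cP cD by (intro mult_entry) auto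
  also have "\<dots> = (\<Sum>l<N. if l = j then P $$ (i,j) * dg j else 0)"
    using ij by (intro sum.cong refl) (auto simp: D_entry)
  also have "\<dots> = A $$ (j,i)" using ij by (simp add: A_entry)
  finally show ?thesis .
qed

lemma D_sym: "(out_degree_mat N A)\<^sup>T = out_degree_mat N A"
  by (rule eq_matI) (auto simp: out_degree_mat_def)

lemma L_eq: "laplacian N A = out_degree_mat N A * (1\<^sub>m N - P\<^sup>T)"
proof -
  have "out_degree_mat N A * (1\<^sub>m N - P\<^sup>T) = out_degree_mat N A * 1\<^sub>m N - out_degree_mat N A * P\<^sup>T"
    using cD cP by (intro mult_minus_distrib_mat) auto
  also have "\<dots> = laplacian N A" using cD A_eq[symmetric] by (simp add: laplacian_def)
  finally show ?thesis by simp
qed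

lemma UtDU: "(1\<^sub>m N - P\<^sup>T)\<^sup>T * out_degree_mat N A * (1\<^sub>m N - P\<^sup>T)
   = out_degree_mat N A - P * out_degree_mat N A - (out_degree_mat N A * P\<^sup>T - P * out_degree_mat N A * P\<^sup>T)"
proof -
  define D where "D = out_degree_mat N A"
  have D: "D \<in> carrier_mat N N" unfolding D_def by (rule cD)
  have "(1\<^sub>m N - P\<^sup>T)\<^sup>T = 1\<^sub>m N - P" using cP by (simp add: transpose_minus[of _ N N])
  moreover have "(1\<^sub>m N - P) * D = D - P * D" using cP D
    by (subst minus_mult_distrib_mat[of _ N N]) auto
  moreover have "(D - P * D) * (1\<^sub>m N - P\<^sup>T) = (D - P * D) - (D * P\<^sup>T - P * D * P\<^sup>T)"
  proof -
    have "(D - P * D) * (1\<^sub>m N - P\<^sup>T) = (D - P * D) * 1\<^sub>m N - (D - P * D) * P\<^sup>T"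
      using cP D by (intro mult_minus_distrib_mat[of _ N N]) auto
    also have "(D - P * D) * P\<^sup>T = D * P\<^sup>T - P * D * P\<^sup>T"
      using cP D by (intro minus_mult_distrib_mat[of _ N N]) auto
    finally show ?thesis using cP D by simp
  qed
  ultimately show ?thesis unfolding D_def[symmetric] by simp
qed

lemma Mlap: "laplacian N (undirected_version A) =
   (1/2) \<cdot>\<^sub>m ((1\<^sub>m N - P\<^sup>T)\<^sup>T * out_degree_mat N A * (1\<^sub>m N - P\<^sup>T))"
proof -
  define D where "D = out_degree_mat N A"
  have D: "D \<in> carrier_mat N N" unfolding D_def by (rule cD)
  have PDPt: "P * D * P\<^sup>T = P * A" unfolding D_def using cP cD by (simp add: A_eq[symmetric])
  show ?thesis unfolding UtDU unfolding D_def[symmetric] PDPt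
  proof (rule eq_matI)
    fix i j assume "i < dim_row ((1/2) \<cdot>\<^sub>m (D - P * D - (D * P\<^sup>T - P * A)))"
      "j < dim_col ((1/2) \<cdot>\<^sub>m (D - P * D - (D * P\<^sup>T - P * A)))"
    hence ij: "i < N" "j < N" using D cP cA by auto
    have Au: "undirected_version A $$ (i,j) = (A $$ (i,j) + A $$ (j,i)) / 2" if "i < N" "j < N" for i j
      using that cA by (simp add: undirected_version_def)
    have cAu: "undirected_version A \<in> carrier_mat N N" using cA by (simp add: undirected_version_def)
    have rs: "(\<Sum>l<N. undirected_version A $$ (i,l)) = (dg i + (\<Sum>l<N. A $$ (l,i))) / 2"
      using ij by (simp add: Au dg_def sum.distrib sum_divide_distrib[symmetric])
    have "laplacian N (undirected_version A) $$ (i,j) =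
       (if i = j then (\<Sum>l<N. undirected_version A $$ (i,l)) else 0) - undirected_version A $$ (i,j)"
      using ij cAu by (simp add: laplacian_def out_degree_mat_def)
    also have "\<dots> = (1/2) * (D $$ (i,j) - (P * D) $$ (i,j) - ((D * P\<^sup>T) $$ (i,j) - (P * A) $$ (i,j)))"
    proof -
      have e1: "(P * D) $$ (i,j) = A $$ (j,i)" using PD_entry[OF ij] unfolding D_def .
      have e2: "(D * P\<^sup>T) $$ (i,j) = A $$ (i,j)" unfolding D_def using A_eq by simp
      have e3: "(P * A) $$ (i,j) = (if i = j then (\<Sum>l<N. A $$ (l,i)) else 0)" using PA_entry[OF ij] .
      have e4: "D $$ (i,j) = (if i = j then dg i else 0)" using D_entry[OF ij] unfolding D_def .
      show ?thesis unfolding e1 e2 e3 e4 rs using ij by (simp add: Au field_simps)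
    qed
    also have "\<dots> = ((1/2) \<cdot>\<^sub>m (D - P * D - (D * P\<^sup>T - P * A))) $$ (i,j)"
      using ij D cP cA by simp
    finally show "laplacian N (undirected_version A) $$ (i,j) = ((1/2) \<cdot>\<^sub>m (D - P * D - (D * P\<^sup>T - P * A))) $$ (i,j)" .
  qed (use D cP cA in \<open>auto simp: laplacian_def out_degree_mat_def undirected_version_def\<close>)
qed

lemma Lap_sym: assumes B: "B \<in> carrier_mat N N" and Bs: "B\<^sup>T = B"
  shows "(laplacian N B)\<^sup>T = laplacian N B"
proof (rule eq_matI)
  have Be: "B $$ (j,i) = B $$ (i,j)" if "i < N" "j < N" for i j
    using arg_cong[OF Bs, of "\<lambda>M. M $$ (i,j)"] that B by simp
  fix i j assume "i < dim_row (laplacian N B)" "j < dim_col (laplacian N B)"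
  hence ij: "i < N" "j < N" using B by (auto simp: laplacian_def out_degree_mat_def)
  thus "(laplacian N B)\<^sup>T $$ (i,j) = laplacian N B $$ (i,j)" using B Be[OF ij]
    by (auto simp: laplacian_def out_degree_mat_def)
qed (use B in \<open>auto simp: laplacian_def out_degree_mat_def\<close>)

lemma cAu: "undirected_version A \<in> carrier_mat N N" using cA by (simp add: undirected_version_def)

lemma Au_sym: "(undirected_version A)\<^sup>T = undirected_version A"
  using cA by (intro eq_matI) (auto simp: undirected_version_def)

lemma M_sym: "(laplacian N (undirected_version A))\<^sup>T = laplacian N (undirected_version A)"
  by (rule Lap_sym[OF cAu Au_sym])

lemma cL: "laplacian N A \<in> carrier_mat N N" using cA by (simp add: laplacian_def out_degree_mat_def)
lemma cM: "laplacian N (undirected_version A) \<in> carrier_mat N N"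
  using cAu by (simp add: laplacian_def out_degree_mat_def)

lemma Mfull_identity: "laplacian N (undirected_version A) * laplacian N A + (laplacian N A)\<^sup>T * laplacian N (undirected_version A)
   = 2 \<cdot>\<^sub>m (laplacian N (undirected_version A) * laplacian N (undirected_version A))"
  unfolding Mlap L_eq
  by (rule Mlap_identity[OF cD _ D_sym]) (use cP PtP in auto)

lemma Ux_entry: assumes x: "x \<in> carrier_vec N" and i: "i < N"
  shows "((1\<^sub>m N - P\<^sup>T) *\<^sub>v x) $ i = x $ i - (\<Sum>l<N. P $$ (l,i) * x $ l)"
proof -
  have "((1\<^sub>m N - P\<^sup>T) *\<^sub>v x) $ i = (\<Sum>l<N. ((if i = l then 1 else 0) - P $$ (l,i)) * x $ l)"
    using x i cP by (simp add: scalar_prod_def atLeast0LessThan)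
  also have "\<dots> = (\<Sum>l<N. (if i = l then x $ l else 0) - P $$ (l,i) * x $ l)"
    by (intro sum.cong refl) (auto simp: algebra_simps)
  also have "\<dots> = (\<Sum>l<N. (if i = l then x $ l else 0)) - (\<Sum>l<N. P $$ (l,i) * x $ l)"
    by (simp add: sum_subtractf)
  also have "\<dots> = x $ i - (\<Sum>l<N. P $$ (l,i) * x $ l)" using i by simp
  finally show ?thesis .
qed

lemma quadM: assumes x: "x \<in> carrier_vec N"
  shows "x \<bullet> (laplacian N (undirected_version A) *\<^sub>v x)
    = (1/2) * (\<Sum>i<N. dg i * (((1\<^sub>m N - P\<^sup>T) *\<^sub>v x) $ i)^2)"
proof -
  define U where "U = 1\<^sub>m N - P\<^sup>T"
  have U: "U \<in> carrier_mat N N" unfolding U_def using cP by simp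
  have "laplacian N (undirected_version A) *\<^sub>v x = (1/2) \<cdot>\<^sub>v ((U\<^sup>T * out_degree_mat N A * U) *\<^sub>v x)"
    unfolding Mlap U_def[symmetric] using U cD x by (intro smult_mat_vec) auto
  hence "x \<bullet> (laplacian N (undirected_version A) *\<^sub>v x) = (1/2) * (x \<bullet> ((U\<^sup>T * out_degree_mat N A * U) *\<^sub>v x))"
    using U cD x by simp
  also have "x \<bullet> ((U\<^sup>T * out_degree_mat N A * U) *\<^sub>v x) = (\<Sum>i<N. out_degree_mat N A $$ (i,i) * ((U *\<^sub>v x) $ i)^2)"
    using U cD x by (intro quad_diag) (auto simp: D_entry)
  also have "\<dots> = (\<Sum>i<N. dg i * ((U *\<^sub>v x) $ i)^2)" by (intro sum.cong refl) (auto simp: D_entry)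
  finally show ?thesis unfolding U_def .
qed

lemma quadM_nonneg: "x \<in> carrier_vec N \<Longrightarrow> x \<bullet> (laplacian N (undirected_version A) *\<^sub>v x) \<ge> 0"
  unfolding quadM by (simp, intro sum_nonneg mult_nonneg_nonneg) (auto simp: dg_nonneg)

lemma quadM_zero: assumes x: "x \<in> carrier_vec N" and conn: "connected_graph N A"
  and z: "x \<bullet> (laplacian N (undirected_version A) *\<^sub>v x) = 0"
  shows "\<exists>c. x = c \<cdot>\<^sub>v ones_vec N"
proof -
  obtain k where k: "k < N" and reach: "\<And>i. i < N \<Longrightarrow> (i,k) \<in> (edges N A)\<^sup>*"
    using conn unfolding connected_graph_def globally_reachable_def by blast
  have "(\<Sum>i<N. dg i * (((1\<^sub>m N - P\<^sup>T) *\<^sub>v x) $ i)^2) = 0" using z quadM[OF x] by simp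
  hence t0: "\<And>i. i < N \<Longrightarrow> dg i * (((1\<^sub>m N - P\<^sup>T) *\<^sub>v x) $ i)^2 = 0"
    using dg_nonneg by (subst (asm) sum_nonneg_eq_0_iff) auto
  have edge: "x $ i = x $ j" if e: "(i,j) \<in> edges N A" for i j
  proof -
    from e have ij: "i < N" "j < N" and pos: "A $$ (i,j) > 0" by (auto simp: edges_def)
    have "dg i * P $$ (j,i) > 0" using pos A_entry[OF ij] by simp
    hence dpos: "dg i \<noteq> 0" and Pji: "P $$ (j,i) = 1" using P01[OF ij(2) ij(1)] by auto
    obtain j0 where "\<And>l. l < N \<Longrightarrow> P $$ (l,i) = 1 \<Longrightarrow> l = j0"
      using Pcol[OF ij(1)] by blast
    hence uq: "\<And>l. l < N \<Longrightarrow> P $$ (l,i) = 1 \<Longrightarrow> l = j" using Pji ij by metis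
    have "(\<Sum>l<N. P $$ (l,i) * x $ l) = (\<Sum>l<N. if l = j then x $ j else 0)"
    proof (intro sum.cong refl)
      fix l assume "l \<in> {..<N}"
      hence lN: "l < N" by simp
      show "P $$ (l,i) * x $ l = (if l = j then x $ j else 0)"
      proof (cases "l = j")
        case True thus ?thesis using Pji by simp
      next
        case False
        hence "P $$ (l,i) \<noteq> 1" using uq lN by blast
        hence "P $$ (l,i) = 0" using P01[OF lN ij(1)] by simp
        thus ?thesis using False by simp
      qed
    qed
    also have "\<dots> = x $ j" using ij by simp
    finally have s: "(\<Sum>l<N. P $$ (l,i) * x $ l) = x $ j" .
    have "(((1\<^sub>m N - P\<^sup>T) *\<^sub>v x) $ i)^2 = 0" using t0[OF ij(1)] dpos by simp
    thus ?thesis using Ux_entry[OF x ij(1)] s by simp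
  qed
  have "x $ i = x $ k" if "i < N" for i
  proof -
    have "(i,k) \<in> (edges N A)\<^sup>*" using reach[OF that] .
    thus ?thesis
    proof (induction rule: rtrancl_induct)
      case base thus ?case by simp
    next
      case (step y z) thus ?case using edge by simp
    qed
  qed
  hence "x = (x $ k) \<cdot>\<^sub>v ones_vec N" using x by (intro eq_vecI) (auto simp: ones_vec_def)
  thus ?thesis by blast
qed

end


lemma assoc_dim: "dim_col A = dim_row B \<Longrightarrow> dim_col B = dim_row C \<Longrightarrow> (A :: real mat) * B * C = A * (B * C)"
  by (rule assoc_mult_mat[of A "dim_row A" "dim_col A" B "dim_col B" C "dim_col C"]) auto

lemma transpose_mult_dim: "dim_col A = dim_row B \<Longrightarrow> ((A :: real mat) * B)\<^sup>T = B\<^sup>T * A\<^sup>T"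
  by (rule transpose_mult[of A "dim_row A" "dim_col A" B "dim_col B"]) auto

lemma mult_smult_vec: "(Q :: real mat) \<in> carrier_mat n m \<Longrightarrow> v \<in> carrier_vec m \<Longrightarrow> Q *\<^sub>v (c \<cdot>\<^sub>v v) = c \<cdot>\<^sub>v (Q *\<^sub>v v)"
  by (rule eq_vecI) (auto simp: scalar_prod_def sum_distrib_left ac_simps)

lemma comb4: "(X1 :: real mat) \<in> carrier_mat n n \<Longrightarrow> X2 \<in> carrier_mat n n \<Longrightarrow> X3 \<in> carrier_mat n n \<Longrightarrow> X4 \<in> carrier_mat n n \<Longrightarrow>
  (X1 - X2) + (X3 - X4) = (X1 + X3) - (X2 + X4)"
  by (intro eq_matI) auto

lemma lyap_THE:
  assumes P: "P \<in> carrier_mat n n" and Lm: "Lm \<in> carrier_mat n n" and Ps: "P\<^sup>T = P" and pd: "pd n P"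
    and PL: "P * Lm + Lm\<^sup>T * P = 2 \<cdot>\<^sub>m (P * P)"
    and B: "B \<in> carrier_mat n n" and BP: "B * P = 1\<^sub>m n" and PB: "P * B = 1\<^sub>m n"
  shows "(THE S. S \<in> carrier_mat n n \<and> Lm * S + S * Lm\<^sup>T = 1\<^sub>m n) = (1/2) \<cdot>\<^sub>m B"
proof -
  have cm[simp]: "\<And>A B :: real mat. A \<in> carrier_mat n n \<Longrightarrow> B \<in> carrier_mat n n \<Longrightarrow> A * B \<in> carrier_mat n n" by simp
  have ca[simp]: "\<And>A B C :: real mat. A \<in> carrier_mat n n \<Longrightarrow> B \<in> carrier_mat n n \<Longrightarrow> C \<in> carrier_mat n n \<Longrightarrow> A * B * C = A * (B * C)" by simp
  have ct[simp]: "\<And>A :: real mat. A \<in> carrier_mat n n \<Longrightarrow> A\<^sup>T \<in> carrier_mat n n" by simp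
  have key: "Lm * B + B * Lm\<^sup>T = 2 \<cdot>\<^sub>m 1\<^sub>m n"
  proof -
    have "B * (P * Lm + Lm\<^sup>T * P) * B = B * (2 \<cdot>\<^sub>m (P * P)) * B" unfolding PL ..
    also have "B * (P * Lm + Lm\<^sup>T * P) * B = B * (P * Lm) * B + B * (Lm\<^sup>T * P) * B"
    proof -
      have "B * (P * Lm + Lm\<^sup>T * P) = B * (P * Lm) + B * (Lm\<^sup>T * P)"
        using B P Lm by (intro mult_add_distrib_mat) auto
      moreover have "(B * (P * Lm) + B * (Lm\<^sup>T * P)) * B = B * (P * Lm) * B + B * (Lm\<^sup>T * P) * B"
        using B P Lm by (intro add_mult_distrib_mat) auto
      ultimately show ?thesis by simp
    qed
    also have "B * (P * Lm) * B = Lm * B" using B P Lm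
      by (simp add: assoc_mult_mat[of B n n P n Lm n, symmetric] BP)
    also have "B * (Lm\<^sup>T * P) * B = B * Lm\<^sup>T" using B P Lm by (simp add: PB)
    also have "B * (2 \<cdot>\<^sub>m (P * P)) * B = 2 \<cdot>\<^sub>m 1\<^sub>m n"
    proof -
      have "B * (2 \<cdot>\<^sub>m (P * P)) * B = 2 \<cdot>\<^sub>m (B * (P * P) * B)"
        using B P by (simp add: mult_smult_distrib[of _ n n _ n] mult_smult_assoc_mat[of _ n n _ n])
      also have "B * (P * P) * B = (B * P) * (P * B)" using B P by simp
      finally show ?thesis using B P by (simp add: BP PB)
    qed
    finally show ?thesis .
  qed
  define S0 where "S0 = (1/2) \<cdot>\<^sub>m B"
  have S0: "S0 \<in> carrier_mat n n" unfolding S0_def using B by simp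
  have sol: "Lm * S0 + S0 * Lm\<^sup>T = 1\<^sub>m n"
  proof -
    have "Lm * S0 + S0 * Lm\<^sup>T = (1/2) \<cdot>\<^sub>m (Lm * B + B * Lm\<^sup>T)" unfolding S0_def using B Lm
      by (intro eq_matI) (auto simp: mult_smult_distrib[of _ n n _ n] mult_smult_assoc_mat[of _ n n _ n] algebra_simps)
    also have "\<dots> = 1\<^sub>m n" unfolding key by (intro eq_matI) auto
    finally show ?thesis .
  qed
  show ?thesis unfolding S0_def[symmetric]
  proof (rule the_equality)
    show "S0 \<in> carrier_mat n n \<and> Lm * S0 + S0 * Lm\<^sup>T = 1\<^sub>m n" using S0 sol by simp
  next
    fix S assume S: "S \<in> carrier_mat n n \<and> Lm * S + S * Lm\<^sup>T = 1\<^sub>m n"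
    define E where "E = S - S0"
    have E: "E \<in> carrier_mat n n" unfolding E_def using S S0 by simp
    have "Lm * E + E * Lm\<^sup>T = (Lm * S + S * Lm\<^sup>T) - (Lm * S0 + S0 * Lm\<^sup>T)"
    proof -
      have "Lm * E = Lm * S - Lm * S0" unfolding E_def using S S0 Lm by (intro mult_minus_distrib_mat) auto
      moreover have "E * Lm\<^sup>T = S * Lm\<^sup>T - S0 * Lm\<^sup>T" unfolding E_def using S S0 Lm
        by (intro minus_mult_distrib_mat) auto
      ultimately have "Lm * E + E * Lm\<^sup>T = (Lm * S - Lm * S0) + (S * Lm\<^sup>T - S0 * Lm\<^sup>T)" by simp
      also have "\<dots> = (Lm * S + S * Lm\<^sup>T) - (Lm * S0 + S0 * Lm\<^sup>T)"
        by (rule comb4) (use S S0 Lm in auto)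
      finally show ?thesis .
    qed
    also have "\<dots> = 0\<^sub>m n n" unfolding sol using S by (intro eq_matI) auto
    finally have "E = 0\<^sub>m n n" using lyap_unique[OF P Lm E Ps pd PL] by simp
    hence E0: "S - S0 = 0\<^sub>m n n" unfolding E_def .
    show "S = S0"
    proof (rule eq_matI)
      fix i j assume "i < dim_row S0" "j < dim_col S0"
      hence ij: "i < n" "j < n" using S0 by auto
      have "(S - S0) $$ (i,j) = 0" unfolding E0 using ij by simp
      thus "S $$ (i,j) = S0 $$ (i,j)" using ij S S0 by simp
    qed (use S S0 in auto)
  qed
qed

lemma final_abstract:
  fixes Q L M :: "real mat"
  assumes N: "N \<ge> 1" and vQ: "valid_Q N Q" and L: "L \<in> carrier_mat N N" and M: "M \<in> carrier_mat N N"
    and Ms: "M\<^sup>T = M" and MPi: "M * Pi_mat N = M"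
    and MLe: "M * L + L\<^sup>T * M = 2 \<cdot>\<^sub>m (M * M)"
    and qnn: "\<And>x. x \<in> carrier_vec N \<Longrightarrow> x \<bullet> (M *\<^sub>v x) \<ge> 0"
    and qz: "\<And>x. x \<in> carrier_vec N \<Longrightarrow> x \<bullet> (M *\<^sub>v x) = 0 \<Longrightarrow> \<exists>c. x = c \<cdot>\<^sub>v ones_vec N"
  shows "(THE S. S \<in> carrier_mat (N-1) (N-1) \<and> Q * L * Q\<^sup>T * S + S * (Q * L * Q\<^sup>T)\<^sup>T = 1\<^sub>m (N-1)) =
         (THE S. S \<in> carrier_mat (N-1) (N-1) \<and> Q * M * Q\<^sup>T * S + S * (Q * M * Q\<^sup>T)\<^sup>T = 1\<^sub>m (N-1))"
proof -
  define n where "n = N - 1"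
  have Q: "Q \<in> carrier_mat n N" and Q1: "Q *\<^sub>v ones_vec N = 0\<^sub>v n" and QQ: "Q * Q\<^sup>T = 1\<^sub>m n"
    and QtQ: "Q\<^sup>T * Q = Pi_mat N"
    using vQ unfolding valid_Q_def n_def by auto
  have dQ[simp]: "dim_row Q = n" "dim_col Q = N" using Q by auto
  have dL[simp]: "dim_row L = N" "dim_col L = N" using L by auto
  have dM[simp]: "dim_row M = N" "dim_col M = N" using M by auto
  have PiM: "Pi_mat N * M = M"
  proof -
    have Pis: "(Pi_mat N)\<^sup>T = Pi_mat N" by (intro eq_matI) (auto simp: Pi_mat_def)
    have "(M * Pi_mat N)\<^sup>T = (Pi_mat N)\<^sup>T * M\<^sup>T" by (rule transpose_mult_dim) (simp add: Pi_mat_def)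
    hence "M = Pi_mat N * M" unfolding MPi Pis Ms .
    thus ?thesis by simp
  qed
  have h1: "Q\<^sup>T * (Q * (M * X)) = M * X" if "dim_row X = N" for X
  proof -
    have "Q\<^sup>T * (Q * (M * X)) = (Q\<^sup>T * Q) * (M * X)" using that by (simp add: assoc_dim)
    also have "\<dots> = (Pi_mat N * M) * X" unfolding QtQ using that by (simp add: assoc_dim Pi_mat_def)
    finally show ?thesis unfolding PiM .
  qed
  have h2: "M * (Q\<^sup>T * (Q * X)) = M * X" if "dim_row X = N" for X
  proof -
    have "M * (Q\<^sup>T * (Q * X)) = (M * (Q\<^sup>T * Q)) * X" using that by (simp add: assoc_dim)
    also have "\<dots> = M * X" unfolding QtQ MPi ..
    finally show ?thesis .
  qed
  define Mb where "Mb = Q * M * Q\<^sup>T"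
  define Lb where "Lb = Q * L * Q\<^sup>T"
  have Mb: "Mb \<in> carrier_mat n n" unfolding Mb_def using Q M by simp
  have Lb: "Lb \<in> carrier_mat n n" unfolding Lb_def using Q L by simp
  have Mbs: "Mb\<^sup>T = Mb" unfolding Mb_def by (simp add: transpose_mult_dim assoc_dim Ms)
  have e1: "Mb * Lb = Q * (M * L) * Q\<^sup>T" unfolding Mb_def Lb_def by (simp add: assoc_dim h2)
  have e2: "Lb\<^sup>T * Mb = Q * (L\<^sup>T * M) * Q\<^sup>T" unfolding Mb_def Lb_def by (simp add: assoc_dim transpose_mult_dim h1)
  have e3: "Mb * Mb = Q * (M * M) * Q\<^sup>T" unfolding Mb_def by (simp add: assoc_dim h1)
  have MbLb: "Mb * Lb + Lb\<^sup>T * Mb = 2 \<cdot>\<^sub>m (Mb * Mb)"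
  proof -
    have "Q * (M * L) * Q\<^sup>T + Q * (L\<^sup>T * M) * Q\<^sup>T = Q * (M * L + L\<^sup>T * M) * Q\<^sup>T"
    proof -
      have "Q * (M * L + L\<^sup>T * M) = Q * (M * L) + Q * (L\<^sup>T * M)" using Q M L
        by (intro mult_add_distrib_mat[of Q n N "M * L" N "L\<^sup>T * M"]) auto
      moreover have "(Q * (M * L) + Q * (L\<^sup>T * M)) * Q\<^sup>T = Q * (M * L) * Q\<^sup>T + Q * (L\<^sup>T * M) * Q\<^sup>T"
        using Q M L by (intro add_mult_distrib_mat[of "Q * (M * L)" n N "Q * (L\<^sup>T * M)" "Q\<^sup>T" n]) auto
      ultimately show ?thesis by simp
    qed
    also have "\<dots> = Q * (2 \<cdot>\<^sub>m (M * M)) * Q\<^sup>T" unfolding MLe ..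
    also have "\<dots> = 2 \<cdot>\<^sub>m (Q * (M * M) * Q\<^sup>T)" using Q M
      by (simp add: mult_smult_distrib[of _ n N _ N] mult_smult_assoc_mat[of _ n N _ n])
    finally show ?thesis unfolding e1 e2 e3 .
  qed
  have pdM: "pd n Mb" unfolding pd_def
  proof (intro ballI impI)
    fix y :: "real vec" assume y: "y \<in> carrier_vec n" and y0: "y \<noteq> 0\<^sub>v n"
    define x where "x = Q\<^sup>T *\<^sub>v y"
    have x: "x \<in> carrier_vec N" unfolding x_def using Q y by simp
    have "Mb *\<^sub>v y = Q *\<^sub>v (M *\<^sub>v x)" unfolding Mb_def x_def using Q M y
      by (simp add: assoc_mult_mat_vec[of _ n N _ n] assoc_mult_mat_vec[of _ N N _ n])
    hence "y \<bullet> (Mb *\<^sub>v y) = y \<bullet> (Q *\<^sub>v (M *\<^sub>v x))" by simp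
    also have "\<dots> = x \<bullet> (M *\<^sub>v x)" unfolding x_def
      by (rule transpose_vec_mult_scalar[symmetric]) (use Q M y x in auto)
    finally have eq: "y \<bullet> (Mb *\<^sub>v y) = x \<bullet> (M *\<^sub>v x)" .
    show "y \<bullet> (Mb *\<^sub>v y) > 0"
    proof (rule ccontr)
      assume "\<not> ?thesis"
      hence "x \<bullet> (M *\<^sub>v x) = 0" using eq qnn[OF x] by simp
      then obtain c where c: "x = c \<cdot>\<^sub>v ones_vec N" using qz[OF x] by blast
      have "y = (Q * Q\<^sup>T) *\<^sub>v y" unfolding QQ using y by simp
      also have "\<dots> = Q *\<^sub>v x" unfolding x_def using Q y by simp
      also have "\<dots> = c \<cdot>\<^sub>v (Q *\<^sub>v ones_vec N)" unfolding c
        by (rule mult_smult_vec[OF Q]) (simp add: ones_vec_def)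
      also have "\<dots> = 0\<^sub>v n" unfolding Q1 by (intro eq_vecI) auto
      finally show False using y0 by simp
    qed
  qed
  have det: "det Mb \<noteq> 0"
  proof
    assume "det Mb = 0"
    then obtain v where v: "v \<in> carrier_vec n" "v \<noteq> 0\<^sub>v n" "Mb *\<^sub>v v = 0\<^sub>v n"
      using det_0_iff_vec_prod_zero_field[OF Mb] by blast
    have "v \<bullet> (Mb *\<^sub>v v) > 0" using pdM v unfolding pd_def by blast
    thus False using v by simp
  qed
  from det_non_zero_imp_unit[OF Mb det, of "()"]
  have "Mb \<in> Units (ring_mat TYPE(real) n ())" .
  then obtain B where BM: "B * Mb = 1\<^sub>m n" and B: "B \<in> carrier_mat n n"
    unfolding Units_def ring_mat_def by auto
  have MB: "Mb * B = 1\<^sub>m n" using mat_mult_left_right_inverse[OF B Mb BM] .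
  have t1: "(THE S. S \<in> carrier_mat n n \<and> Lb * S + S * Lb\<^sup>T = 1\<^sub>m n) = (1/2) \<cdot>\<^sub>m B"
    by (rule lyap_THE[OF Mb Lb Mbs pdM MbLb B BM MB])
  have MbMb: "Mb * Mb + Mb\<^sup>T * Mb = 2 \<cdot>\<^sub>m (Mb * Mb)" unfolding Mbs using Mb
    by (intro eq_matI) auto
  have t2: "(THE S. S \<in> carrier_mat n n \<and> Mb * S + S * Mb\<^sup>T = 1\<^sub>m n) = (1/2) \<cdot>\<^sub>m B"
    by (rule lyap_THE[OF Mb Mb Mbs pdM MbMb B BM MB])
  show ?thesis unfolding n_def[symmetric] Mb_def[symmetric] Lb_def[symmetric]
    by (rule trans[OF t1 t2[symmetric]])
qed

theorem proposition1:
  fixes N :: nat and A :: "real mat"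
  assumes "adjacency_matrix N A"
    and "connected_graph N A"
    and "\<exists>P. permutation_mat N P \<and> out_degree_mat N A = A * P"
  shows "\<forall>k<N. \<forall>j<N. effective_resistance N A k j
            = effective_resistance N (undirected_version A) k j"
proof (intro allI impI)
  fix k j assume k: "k < N" and j: "j < N"
  hence N: "N \<ge> 1" by simp
  note adj = assms(1) and conn = assms(2)
  obtain P where perm: "permutation_mat N P" and DAP: "out_degree_mat N A = A * P"
    using assms(3) by blast
  have vQ: "valid_Q N (Q_of N)" by (rule Q_of_valid[OF N])
  have qz: "\<exists>c. x = c \<cdot>\<^sub>v ones_vec N"
    if "x \<in> carrier_vec N" "x \<bullet> (laplacian N (undirected_version A) *\<^sub>v x) = 0" for x
    by (rule quadM_zero[OF adj perm DAP that(1) conn that(2)])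
  have S: "Sigma_of N A = Sigma_of N (undirected_version A)"
    unfolding Sigma_of_def reduced_laplacian_def
    by (rule final_abstract[OF N vQ cL[OF adj perm DAP] cM[OF adj perm DAP] M_sym[OF adj perm DAP]
          laplacian_Pi[OF cAu[OF adj perm DAP]] Mfull_identity[OF adj perm DAP]
          quadM_nonneg[OF adj perm DAP] qz])
  show "effective_resistance N A k j = effective_resistance N (undirected_version A) k j"
    unfolding effective_resistance_def X_of_def S ..
qed

end
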